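(* Let $d\ge1$ and let $(A_q)_{q\in\mathbb{N}}$ be a sequence of Lebesgue measurable subsets of $[0,1)^d$. Let $A$ be the set of pairs $(\mathbf{x},\boldsymbol\gamma)\in[0,1)^d\times[0,1)^d$ for which there exist infinitely many $q\in\mathbb{N}$ such that, for some $\mathbf{p}\in\mathbb{Z}^d$, $q\mathbf{x}-\boldsymbol\gamma-\mathbf{p}\in A_q$. Then $$\mu_{2d}(A)=\begin{cases}0,&\text{if }\sum_{r=1}^\infty\mu_d(A_r)<\infty,\\ 1,&\text{if }\sum_{r=1}^\infty\mu_d(A_r)=\infty,\end{cases}$$ where $\mu_s$ denotes $s$-dimensional Lebesgue measure. *)

theory Defs
  imports "HOL-Analysis.Analysis"
begin

definition unit_cube :: "(real ^ 'n) set" where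
  "unit_cube = {x. \<forall>i. 0 \<le> x $ i \<and> x $ i < 1}"

definition int_vecs :: "(real ^ 'n) set" where
  "int_vecs = {p. \<forall>i. p $ i \<in> \<int>}"

end

theory Submission
  imports Defs
begin


definition fr :: "real ^ 'n \<Rightarrow> real ^ 'n" where "fr v = (\<chi> i. frac (v $ i))"
definition ivec :: "int ^ 'n \<Rightarrow> real ^ 'n" where "ivec z = (\<chi> i. of_int (z $ i))"
definition enum_iv :: "nat \<Rightarrow> int ^ 'n" where "enum_iv = (SOME f. bij f)"

lemma nth_meas[measurable]: "(\<lambda>v::real^'n. v $ i) \<in> borel_measurable borel"
proof -
  have "(\<lambda>v::real^'n. v \<bullet> axis i 1) \<in> borel_measurable borel" by simp
  then show ?thesis by (simp add: inner_axis)
qed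

lemma fr_meas[measurable]: "fr \<in> borel_measurable borel"
proof (subst borel_measurable_euclidean_space, intro ballI)
  fix b :: "real^'n" assume "b \<in> Basis"
  then obtain i u where "u \<in> (Basis::real set)" "b = axis i u" unfolding Basis_vec_def by blast
  then have b: "b = axis i 1" by (simp add: Basis_real_def)
  have "(\<lambda>x. fr x \<bullet> b) = (\<lambda>x. x $ i - real_of_int \<lfloor>x $ i\<rfloor>)"
    by (simp add: b inner_axis fr_def frac_def)
  moreover have "(\<lambda>x::real^'n. x $ i - real_of_int \<lfloor>x $ i\<rfloor>) \<in> borel_measurable borel"
    by measurable
  ultimately show "(\<lambda>x. fr x \<bullet> b) \<in> borel_measurable borel" by simp
qed

lemma unit_cube_borel[measurable]: "unit_cube \<in> sets borel"
proof -
  have "unit_cube = (\<Inter>i. {x::real^'n. 0 \<le> x $ i} \<inter> {x. x $ i < 1})"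
    by (auto simp: unit_cube_def)
  also have "\<dots> \<in> sets borel" by measurable
  finally show ?thesis .
qed

lemma bij_enum_iv: "bij (enum_iv :: nat \<Rightarrow> int ^ 'n)"
proof -
  have "inj (\<lambda>n::nat. (\<chi> i. int n) :: int ^ 'n)"
  proof (rule injI)
    fix m n :: nat assume "((\<chi> i. int m) :: int^'n) = (\<chi> i. int n)"
    then have "((\<chi> i. int m) :: int^'n) $ undefined = (\<chi> i. int n) $ undefined" by simp
    then show "m = n" by simp
  qed
  then have "infinite (range (\<lambda>n::nat. (\<chi> i. int n) :: int ^ 'n))"
    by (simp add: finite_image_iff)
  then have "infinite (UNIV :: (int ^ 'n) set)"
    by (rule infinite_super[OF subset_UNIV])
  then obtain e :: "int ^ 'n \<Rightarrow> nat" where "bij e"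
    using countableE_infinite[of "UNIV :: (int ^ 'n) set"] by auto
  then have "bij (inv e)" by (simp add: bij_imp_bij_inv)
  then have "\<exists>f::nat \<Rightarrow> int^'n. bij f" by blast
  then show ?thesis unfolding enum_iv_def by (rule someI_ex)
qed

lemma fr_in_cube: "fr v \<in> unit_cube"
  by (simp add: fr_def unit_cube_def frac_lt_1)

lemma ivec_int: "ivec z \<in> int_vecs"
  by (simp add: ivec_def int_vecs_def)

lemma int_vecs_ivec: "p \<in> int_vecs \<Longrightarrow> \<exists>z. p = ivec z"
  unfolding int_vecs_def ivec_def
  by (rule exI[of _ "\<chi> i. (SOME m. p $ i = of_int m)"]) (auto simp: vec_eq_iff Ints_def intro: someI)

lemma fr_decomp: "v = fr v + ivec (\<chi> i. \<lfloor>v $ i\<rfloor>)"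
  by (simp add: vec_eq_iff fr_def ivec_def frac_def)

lemma fr_add_int: "p \<in> int_vecs \<Longrightarrow> fr (v + p) = fr v"
  by (simp add: vec_eq_iff fr_def int_vecs_def frac_add_int_right)

lemma fr_add_ivec[simp]: "fr (v + ivec z) = fr v"
  by (rule fr_add_int[OF ivec_int])

lemma fr_unique: "u \<in> unit_cube \<Longrightarrow> v - u \<in> int_vecs \<Longrightarrow> fr v = u"
  by (auto simp: vec_eq_iff fr_def unit_cube_def int_vecs_def frac_unique_iff)

lemma fr_fr_add: "fr (fr a + b) = fr (a + b)"
proof -
  have "fr a + b = (a + b) + ivec (- (\<chi> i. \<lfloor>a $ i\<rfloor>))"
    by (simp add: vec_eq_iff fr_def ivec_def frac_def)
  then show ?thesis by (metis fr_add_ivec)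
qed

lemma ex_int_iff_fr: "S \<subseteq> unit_cube \<Longrightarrow> (\<exists>p\<in>int_vecs. v - p \<in> S) \<longleftrightarrow> fr v \<in> S"
proof
  assume S: "S \<subseteq> unit_cube" and "\<exists>p\<in>int_vecs. v - p \<in> S"
  then obtain p where p: "p \<in> int_vecs" "v - p \<in> S" by auto
  have "fr v = v - p"
    by (rule fr_unique) (use p S in auto)
  with p show "fr v \<in> S" by simp
next
  assume "fr v \<in> S"
  moreover have "v - ivec (\<chi> i. \<lfloor>v $ i\<rfloor>) = fr v"
    by (simp add: vec_eq_iff fr_def ivec_def frac_def)
  ultimately show "\<exists>p\<in>int_vecs. v - p \<in> S" using ivec_int by metis
qed

lemma ivec_meas_count[measurable]: "ivec \<in> count_space UNIV \<rightarrow>\<^sub>M borel" by simp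

lemma translate_nn:
  fixes h :: "real ^ 'n \<Rightarrow> ennreal"
  assumes [measurable]: "h \<in> borel_measurable borel"
  shows "(\<integral>\<^sup>+x. h (t + x) \<partial>lborel) = (\<integral>\<^sup>+x. h x \<partial>lborel)"
proof -
  have "(\<integral>\<^sup>+x. h x \<partial>lborel) = (\<integral>\<^sup>+x. h x \<partial>distr lborel borel ((+) t))"
    by (simp add: lborel_distr_plus)
  also have "\<dots> = (\<integral>\<^sup>+x. h (t + x) \<partial>lborel)"
    by (subst nn_integral_distr) auto
  finally show ?thesis ..
qed

lemma scale_nn:
  fixes h :: "real ^ 'n \<Rightarrow> ennreal"
  assumes [measurable]: "h \<in> borel_measurable borel" and c: "c \<noteq> 0"
  shows "(\<integral>\<^sup>+x. h x \<partial>lborel) = ennreal (\<bar>c\<bar> ^ CARD('n)) * (\<integral>\<^sup>+x. h (t + c *\<^sub>R x) \<partial>lborel)"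
proof -
  have [measurable]: "(\<lambda>x::real^'n. t + c *\<^sub>R x) \<in> borel_measurable borel" by simp
  have "(\<integral>\<^sup>+x. h x \<partial>lborel) = (\<integral>\<^sup>+x. h x \<partial>density (distr lborel borel (\<lambda>x. t + c *\<^sub>R x)) (\<lambda>_. \<bar>c\<bar>^DIM(real^'n)))"
    using lborel_affine[OF c, of t] by simp
  also have "\<dots> = (\<integral>\<^sup>+x. ennreal (\<bar>c\<bar>^DIM(real^'n)) * h x \<partial>distr lborel borel (\<lambda>x. t + c *\<^sub>R x))"
    by (subst nn_integral_density) auto
  also have "\<dots> = (\<integral>\<^sup>+x. ennreal (\<bar>c\<bar>^DIM(real^'n)) * h (t + c *\<^sub>R x) \<partial>lborel)"
    by (subst nn_integral_distr) auto
  also have "\<dots> = ennreal (\<bar>c\<bar> ^ CARD('n)) * (\<integral>\<^sup>+x. h (t + c *\<^sub>R x) \<partial>lborel)"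
    by (subst nn_integral_cmult) auto
  finally show ?thesis .
qed


lemma ivec_inj: "ivec z = ivec w \<longleftrightarrow> z = w"
  by (simp add: ivec_def vec_eq_iff)

lemma ivec_diff: "ivec z - ivec w = ivec (z - w)"
  by (simp add: ivec_def vec_eq_iff)

lemma sum_tiles: fixes y :: "real^'n" shows "(\<Sum>n. indicator unit_cube (y - ivec (enum_iv n)) :: ennreal) = 1"
proof -
  define z0 :: "int^'n" where "z0 = (\<chi> i. \<lfloor>y $ i\<rfloor>)"
  define n0 where "n0 = inv enum_iv z0"
  have en0: "enum_iv n0 = z0" unfolding n0_def using bij_enum_iv by (meson bij_is_surj surj_f_inv_f)
  have nz: "indicator unit_cube (y - ivec (enum_iv n)) = (0::ennreal)" if "n \<notin> {n0}" for n
  proof (rule ccontr)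
    assume "indicator unit_cube (y - ivec (enum_iv n)) \<noteq> (0::ennreal)"
    then have c: "y - ivec (enum_iv n) \<in> unit_cube" by (auto simp: indicator_def split: if_splits)
    have "fr y = y - ivec (enum_iv n)" by (rule fr_unique[OF c]) (simp add: ivec_int)
    moreover have "fr y = y - ivec z0" using fr_decomp[of y] unfolding z0_def by (simp add: algebra_simps)
    ultimately have e: "y - ivec (enum_iv n) = y - ivec (enum_iv n0)" using en0 by simp
    have "(ivec (enum_iv n) :: real^'n) = y - (y - ivec (enum_iv n))" by simp
    also have "\<dots> = ivec (enum_iv n0)" unfolding e by simp
    finally have "(ivec (enum_iv n) :: real^'n) = ivec (enum_iv n0)" .
    then have "(enum_iv n :: int^'n) = enum_iv n0" by (simp add: ivec_inj)
    then have "n = n0" using bij_enum_iv by (metis bij_pointE)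
    with that show False by simp
  qed
  have "(\<Sum>n. indicator unit_cube (y - ivec (enum_iv n)) :: ennreal) = (\<Sum>n\<in>{n0}. indicator unit_cube (y - ivec (enum_iv n)))"
    by (rule suminf_finite) (use nz in auto)
  also have "\<dots> = 1"
  proof -
    have "y - ivec z0 = fr y" using fr_decomp[of y] unfolding z0_def by (metis add_diff_cancel_right')
    then show ?thesis using fr_in_cube[of y] en0 by simp
  qed
  finally show ?thesis .
qed

lemma tiling:
  fixes g :: "real^'n \<Rightarrow> ennreal"
  assumes [measurable]: "g \<in> borel_measurable borel"
  shows "(\<integral>\<^sup>+ y. g y \<partial>lborel) = (\<Sum>n. \<integral>\<^sup>+ x. g (x + ivec (enum_iv n)) * indicator unit_cube x \<partial>lborel)"
proof -
  have "(\<integral>\<^sup>+ y. g y \<partial>lborel) = (\<integral>\<^sup>+ y. (\<Sum>n. g y * indicator unit_cube (y - ivec (enum_iv n))) \<partial>lborel)"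
    by (simp add: ennreal_suminf_cmult sum_tiles)
  also have "\<dots> = (\<Sum>n. \<integral>\<^sup>+ y. g y * indicator unit_cube (y - ivec (enum_iv n)) \<partial>lborel)"
    by (rule nn_integral_suminf) measurable
  also have "\<dots> = (\<Sum>n. \<integral>\<^sup>+ x. g (x + ivec (enum_iv n)) * indicator unit_cube x \<partial>lborel)"
  proof (rule suminf_cong)
    fix n
    have "(\<integral>\<^sup>+ y. g y * indicator unit_cube (y - ivec (enum_iv n)) \<partial>lborel)
        = (\<integral>\<^sup>+ x. g (ivec (enum_iv n) + x) * indicator unit_cube (ivec (enum_iv n) + x - ivec (enum_iv n)) \<partial>lborel)"
      by (rule translate_nn[symmetric]) measurable
    then show "(\<integral>\<^sup>+ y. g y * indicator unit_cube (y - ivec (enum_iv n)) \<partial>lborel) = (\<integral>\<^sup>+ x. g (x + ivec (enum_iv n)) * indicator unit_cube x \<partial>lborel)"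
      by (simp add: add.commute)
  qed
  finally show ?thesis .
qed


lemma card_W:
  fixes k :: int and b :: real
  assumes k: "k \<noteq> 0"
  shows "finite {m::int. 0 \<le> (b + m) / k \<and> (b + m) / k < 1} \<and> card {m::int. 0 \<le> (b + m) / k \<and> (b + m) / k < 1} = nat \<bar>k\<bar>"
proof (cases "k > 0")
  case True
  have "{m::int. 0 \<le> (b + m) / k \<and> (b + m) / k < 1} = {\<lceil>-b\<rceil> ..< \<lceil>-b\<rceil> + k}"
  proof (intro set_eqI iffI)
    fix m assume "m \<in> {m::int. 0 \<le> (b + m) / k \<and> (b + m) / k < 1}"
    then have "0 \<le> b + m" "b + m < k" using True by (auto simp: divide_simps)
    then have "\<lceil>-b\<rceil> \<le> m" "m - k < \<lceil>-b\<rceil>"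
      by (simp_all add: ceiling_le_iff less_ceiling_iff)
    then show "m \<in> {\<lceil>-b\<rceil> ..< \<lceil>-b\<rceil> + k}" by simp
  next
    fix m assume "m \<in> {\<lceil>-b\<rceil> ..< \<lceil>-b\<rceil> + k}"
    then have "\<lceil>-b\<rceil> \<le> m" "m - k < \<lceil>-b\<rceil>" by auto
    then have "0 \<le> b + m" "b + m < k"
      by (simp_all add: ceiling_le_iff less_ceiling_iff)
    then show "m \<in> {m::int. 0 \<le> (b + m) / k \<and> (b + m) / k < 1}"
      using True by (auto simp: divide_simps)
  qed
  then show ?thesis using True by simp
next
  case False
  then have kn: "k < 0" using k by simp
  have eq: "{m::int. 0 \<le> (b + m) / k \<and> (b + m) / k < 1} = uminus ` {\<lceil>b\<rceil> ..< \<lceil>b\<rceil> - k}"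
  proof (intro set_eqI iffI)
    fix m assume "m \<in> {m::int. 0 \<le> (b + m) / k \<and> (b + m) / k < 1}"
    then have "b + m \<le> 0" "k < b + m" using kn by (auto simp: divide_simps)
    then have "\<lceil>b\<rceil> \<le> -m" "-m + k < \<lceil>b\<rceil>"
      by (simp_all add: ceiling_le_iff less_ceiling_iff)
    then have "-m \<in> {\<lceil>b\<rceil> ..< \<lceil>b\<rceil> - k}" by simp
    then show "m \<in> uminus ` {\<lceil>b\<rceil> ..< \<lceil>b\<rceil> - k}" by (metis image_eqI minus_minus)
  next
    fix m assume "m \<in> uminus ` {\<lceil>b\<rceil> ..< \<lceil>b\<rceil> - k}"
    then obtain j where j: "m = -j" "j \<in> {\<lceil>b\<rceil> ..< \<lceil>b\<rceil> - k}" by blast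
    from j have "\<lceil>b\<rceil> \<le> -m" "-m + k < \<lceil>b\<rceil>" by auto
    then have "b + m \<le> 0" "k < b + m"
      by (simp_all add: ceiling_le_iff less_ceiling_iff)
    then show "m \<in> {m::int. 0 \<le> (b + m) / k \<and> (b + m) / k < 1}"
      using kn by (auto simp: divide_simps)
  qed
  moreover have "card (uminus ` {\<lceil>b\<rceil> ..< \<lceil>b\<rceil> - k}) = nat \<bar>k\<bar>"
  proof -
    have "card (uminus ` {\<lceil>b\<rceil> ..< \<lceil>b\<rceil> - k}) = card {\<lceil>b\<rceil> ..< \<lceil>b\<rceil> - k}"
      by (rule card_image) (simp add: inj_on_def)
    also have "\<dots> = nat (-k)" by simp
    finally show ?thesis using kn by simp
  qed
  moreover have "finite (uminus ` {\<lceil>b\<rceil> ..< \<lceil>b\<rceil> - k})" by (rule finite_imageI) simp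
  ultimately show ?thesis unfolding eq by blast
qed

lemma count_Z:
  fixes k :: int and a :: "real^'n"
  assumes k: "k \<noteq> 0"
  shows "finite {z :: int^'n. (1 / real_of_int k) *\<^sub>R (a + ivec z) \<in> unit_cube}
    \<and> card {z :: int^'n. (1 / real_of_int k) *\<^sub>R (a + ivec z) \<in> unit_cube} = nat \<bar>k\<bar> ^ CARD('n)"
proof -
  define W where "W i = {m::int. 0 \<le> (a $ i + m) / k \<and> (a $ i + m) / k < 1}" for i
  have Z: "{z :: int^'n. (1 / real_of_int k) *\<^sub>R (a + ivec z) \<in> unit_cube} = {z. \<forall>i. z $ i \<in> W i}"
    by (simp add: unit_cube_def W_def ivec_def)
  have bij: "bij_betw vec_nth {z :: int^'n. \<forall>i. z $ i \<in> W i} (Pi\<^sub>E UNIV W)"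
  proof (rule bij_betw_byWitness[where f'=vec_lambda])
    show "\<forall>z\<in>{z :: int^'n. \<forall>i. z $ i \<in> W i}. vec_lambda (vec_nth z) = z" by simp
    show "\<forall>f\<in>Pi\<^sub>E UNIV W. vec_nth (vec_lambda f) = f" by (simp add: vec_lambda_inverse)
    show "vec_nth ` {z :: int^'n. \<forall>i. z $ i \<in> W i} \<subseteq> Pi\<^sub>E UNIV W" by auto
    show "vec_lambda ` Pi\<^sub>E UNIV W \<subseteq> {z :: int^'n. \<forall>i. z $ i \<in> W i}" by auto
  qed
  have fW: "finite (W i)" "card (W i) = nat \<bar>k\<bar>" for i
    using card_W[OF k, of "a $ i"] unfolding W_def by auto
  have "finite (Pi\<^sub>E (UNIV::'n set) W)" using fW by (intro finite_PiE) auto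
  moreover have "card (Pi\<^sub>E (UNIV::'n set) W) = nat \<bar>k\<bar> ^ CARD('n)"
    by (simp add: card_PiE fW)
  ultimately show ?thesis unfolding Z using bij_betw_finite[OF bij] bij_betw_same_card[OF bij] by simp
qed

lemma sum_count:
  fixes k :: int and a :: "real^'n"
  assumes k: "k \<noteq> 0"
  shows "(\<Sum>n. indicator unit_cube ((1 / real_of_int k) *\<^sub>R (a + ivec (enum_iv n))) :: ennreal)
     = of_nat (nat \<bar>k\<bar> ^ CARD('n))"
proof -
  define Z where "Z = {z :: int^'n. (1 / real_of_int k) *\<^sub>R (a + ivec z) \<in> unit_cube}"
  have fZ: "finite Z" and cZ: "card Z = nat \<bar>k\<bar> ^ CARD('n)" using count_Z[OF k, of a] unfolding Z_def by auto
  define N where "N = enum_iv -` Z"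
  have bN: "bij_betw enum_iv N Z" unfolding N_def using bij_enum_iv
    unfolding bij_betw_def by (metis bij_is_inj bij_is_surj inj_on_subset subset_UNIV surj_image_vimage_eq)
  have fN: "finite N" using bN fZ bij_betw_finite by blast
  have "(\<Sum>n. indicator unit_cube ((1 / real_of_int k) *\<^sub>R (a + ivec (enum_iv n))) :: ennreal)
     = (\<Sum>n\<in>N. indicator unit_cube ((1 / real_of_int k) *\<^sub>R (a + ivec (enum_iv n))))"
    by (rule suminf_finite[OF fN]) (auto simp: N_def Z_def)
  also have "\<dots> = (\<Sum>n\<in>N. 1)" by (intro sum.cong) (auto simp: N_def Z_def)
  also have "\<dots> = of_nat (card N)" by simp
  also have "card N = card Z" using bN by (rule bij_betw_same_card)
  finally show ?thesis using cZ by simp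
qed


lemma of_nat_K: "(of_nat (nat \<bar>k\<bar> ^ m) :: ennreal) = ennreal (\<bar>real_of_int k\<bar> ^ m)"
proof -
  have "(of_nat (nat \<bar>k\<bar> ^ m) :: ennreal) = ennreal (real (nat \<bar>k\<bar> ^ m))"
    by (rule ennreal_of_nat_eq_real_of_nat)
  also have "real (nat \<bar>k\<bar> ^ m) = \<bar>real_of_int k\<bar> ^ m" by simp
  finally show ?thesis .
qed

lemma periodic_scale:
  fixes f :: "real^'n \<Rightarrow> ennreal" and k :: int and t :: "real^'n"
  assumes [measurable]: "f \<in> borel_measurable borel"
    and per: "\<And>v z. f (v + ivec z) = f v" and k: "k \<noteq> 0"
  shows "(\<integral>\<^sup>+ x. f (t + real_of_int k *\<^sub>R x) * indicator unit_cube x \<partial>lborel)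
       = (\<integral>\<^sup>+ x. f x * indicator unit_cube x \<partial>lborel)"
proof -
  define c where "c = real_of_int k"
  have c0: "c \<noteq> 0" using k by (simp add: c_def)
  define \<phi> where "\<phi> y = f y * indicator unit_cube ((1/c) *\<^sub>R (y - t))" for y
  have [measurable]: "\<phi> \<in> borel_measurable borel" unfolding \<phi>_def by measurable
  define K where "K = ennreal (\<bar>c\<bar> ^ CARD('n))"
  have K0: "K \<noteq> 0" using c0 by (simp add: K_def)
  have Ktop: "K \<noteq> \<infinity>" by (simp add: K_def)
  have "(\<integral>\<^sup>+ y. \<phi> y \<partial>lborel) = K * (\<integral>\<^sup>+ x. \<phi> (t + c *\<^sub>R x) \<partial>lborel)"
    unfolding K_def by (rule scale_nn) (use c0 in auto)
  also have "(\<lambda>x. \<phi> (t + c *\<^sub>R x)) = (\<lambda>x. f (t + real_of_int k *\<^sub>R x) * indicator unit_cube x)"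
    using c0 by (simp add: \<phi>_def c_def)
  finally have A: "(\<integral>\<^sup>+ y. \<phi> y \<partial>lborel) = K * (\<integral>\<^sup>+ x. f (t + real_of_int k *\<^sub>R x) * indicator unit_cube x \<partial>lborel)" .
  have "(\<integral>\<^sup>+ y. \<phi> y \<partial>lborel) = (\<Sum>n. \<integral>\<^sup>+ x. \<phi> (x + ivec (enum_iv n)) * indicator unit_cube x \<partial>lborel)"
    by (rule tiling) measurable
  also have "\<dots> = (\<Sum>n. \<integral>\<^sup>+ x. f x * indicator unit_cube x * indicator unit_cube ((1/c) *\<^sub>R ((x - t) + ivec (enum_iv n))) \<partial>lborel)"
    by (intro suminf_cong nn_integral_cong) (simp add: \<phi>_def per algebra_simps)
  also have "\<dots> = (\<integral>\<^sup>+ x. (\<Sum>n. f x * indicator unit_cube x * indicator unit_cube ((1/c) *\<^sub>R ((x - t) + ivec (enum_iv n)))) \<partial>lborel)"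
    by (rule nn_integral_suminf[symmetric]) measurable
  also have "\<dots> = (\<integral>\<^sup>+ x. f x * indicator unit_cube x * K \<partial>lborel)"
  proof (rule nn_integral_cong)
    fix x :: "real^'n"
    have "(\<Sum>n. f x * indicator unit_cube x * indicator unit_cube ((1/c) *\<^sub>R ((x - t) + ivec (enum_iv n))))
        = f x * indicator unit_cube x * (\<Sum>n. indicator unit_cube ((1/c) *\<^sub>R ((x - t) + ivec (enum_iv n))) :: ennreal)"
      by (rule ennreal_suminf_cmult)
    also have "(\<Sum>n. indicator unit_cube ((1/c) *\<^sub>R ((x - t) + ivec (enum_iv n))) :: ennreal) = K"
      using sum_count[OF k, of "x - t"] unfolding K_def c_def of_nat_K by simp
    finally show "(\<Sum>n. f x * indicator unit_cube x * indicator unit_cube ((1/c) *\<^sub>R ((x - t) + ivec (enum_iv n)))) = f x * indicator unit_cube x * K" .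
  qed
  also have "\<dots> = K * (\<integral>\<^sup>+ x. f x * indicator unit_cube x \<partial>lborel)"
    by (subst nn_integral_multc) (auto simp: mult.commute)
  finally have B: "(\<integral>\<^sup>+ y. \<phi> y \<partial>lborel) = K * (\<integral>\<^sup>+ x. f x * indicator unit_cube x \<partial>lborel)" .
  from A B K0 Ktop show ?thesis by (simp add: ennreal_mult_cancel_left)
qed


lemma One_nth: "(One :: real^'n) $ i = 1"
proof -
  have "axis i (1::real) \<in> Basis" unfolding Basis_vec_def Basis_real_def by blast
  then have "(One :: real^'n) \<bullet> axis i 1 = 1" by (simp add: inner_sum_left_Basis)
  then show ?thesis by (simp add: cart_eq_inner_axis)
qed

lemma emeasure_cube: "emeasure lborel (unit_cube :: (real^'n) set) = 1"
proof (rule antisym)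
  have "unit_cube \<subseteq> cbox (0::real^'n) One"
    unfolding unit_cube_def subset_iff mem_box_cart One_nth by (auto intro: less_imp_le)
  then have "emeasure lborel (unit_cube :: (real^'n) set) \<le> emeasure lborel (cbox (0::real^'n) One)"
    by (intro emeasure_mono) auto
  also have "\<dots> = 1" by (simp add: emeasure_lborel_cbox_eq)
  finally show "emeasure lborel (unit_cube :: (real^'n) set) \<le> 1" .
  have "box (0::real^'n) One \<subseteq> unit_cube"
    unfolding unit_cube_def subset_iff mem_box_cart One_nth by (auto intro: less_imp_le)
  then have "emeasure lborel (box (0::real^'n) One) \<le> emeasure lborel (unit_cube :: (real^'n) set)"
    by (intro emeasure_mono) auto
  moreover have "emeasure lborel (box (0::real^'n) One) = 1" by (simp add: emeasure_lborel_box_eq)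
  ultimately show "1 \<le> emeasure lborel (unit_cube :: (real^'n) set)" by simp
qed

lemma emeasure_prod_iter:
  fixes X :: "((real^'n) \<times> (real^'m)) set"
  assumes [measurable]: "X \<in> sets borel"
  shows "emeasure lborel X = (\<integral>\<^sup>+ x. \<integral>\<^sup>+ y. indicator X (x, y) \<partial>lborel \<partial>lborel)"
proof -
  have "emeasure lborel X = (\<integral>\<^sup>+ p. indicator X p \<partial>lborel)" by simp
  also have "\<dots> = (\<integral>\<^sup>+ p. indicator X p \<partial>(lborel \<Otimes>\<^sub>M lborel))" by (simp add: lborel_prod)
  also have "\<dots> = (\<integral>\<^sup>+ x. \<integral>\<^sup>+ y. indicator X (x, y) \<partial>lborel \<partial>lborel)"
    by (rule lborel.nn_integral_fst[symmetric]) (simp add: lborel_prod)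
  finally show ?thesis .
qed

definition E :: "int \<Rightarrow> (real^'n) set \<Rightarrow> ((real^'n) \<times> (real^'n)) set" where
  "E q S = {(x, g). x \<in> unit_cube \<and> g \<in> unit_cube \<and> fr (real_of_int q *\<^sub>R x - g) \<in> S}"

lemma E_borel[measurable]:
  fixes S :: "(real^'n) set"
  assumes [measurable]: "S \<in> sets borel"
  shows "E q S \<in> sets borel"
proof -
  have "E q S = (unit_cube \<times> unit_cube) \<inter> (\<lambda>p. fr (real_of_int q *\<^sub>R fst p - snd p)) -` S"
    by (auto simp: E_def)
  also have "\<dots> \<in> sets borel"
  proof -
    have f: "(\<lambda>p::(real^'n) \<times> (real^'n). fr (real_of_int q *\<^sub>R fst p - snd p)) \<in> borel_measurable borel"
      by (rule measurable_compose[OF _ fr_meas]) (intro borel_measurable_continuous_onI continuous_intros)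
    have c: "(unit_cube :: (real^'n) set) \<times> (unit_cube :: (real^'n) set) \<in> sets borel"
      by (rule borel_Times) auto
    have "(\<lambda>p::(real^'n) \<times> (real^'n). fr (real_of_int q *\<^sub>R fst p - snd p)) -` S \<inter> space borel \<in> sets borel"
      by (rule measurable_sets[OF f]) (simp add: assms)
    with c show ?thesis by (auto intro: sets.Int)
  qed
  finally show ?thesis .
qed

lemma fr_cube_id: "x \<in> unit_cube \<Longrightarrow> fr x = x"
  by (rule fr_unique) (auto simp: int_vecs_def)

lemma emeasure_E:
  fixes S :: "(real^'n) set"
  assumes [measurable]: "S \<in> sets borel" and Ssub: "S \<subseteq> unit_cube"
  shows "emeasure lborel (E q S) = emeasure lborel S"
proof -
  define g where "g v = (indicator S (fr v) :: ennreal)" for v :: "real^'n"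
  have [measurable]: "g \<in> borel_measurable borel" unfolding g_def by measurable
  have gper: "g (v + ivec z) = g v" for v z by (simp add: g_def)
  have inner: "(\<integral>\<^sup>+ y. indicator (E q S) (x, y) \<partial>lborel) = indicator unit_cube x * emeasure lborel S" for x
  proof -
    have "(\<integral>\<^sup>+ y. indicator (E q S) (x, y) \<partial>lborel)
        = (\<integral>\<^sup>+ y. indicator unit_cube x * (g (real_of_int q *\<^sub>R x + real_of_int (-1) *\<^sub>R y) * indicator unit_cube y) \<partial>lborel)"
      by (intro nn_integral_cong) (auto simp: E_def g_def indicator_def)
    also have "\<dots> = indicator unit_cube x * (\<integral>\<^sup>+ y. g (real_of_int q *\<^sub>R x + real_of_int (-1) *\<^sub>R y) * indicator unit_cube y \<partial>lborel)"
      by (rule nn_integral_cmult) measurable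
    also have "(\<integral>\<^sup>+ y. g (real_of_int q *\<^sub>R x + real_of_int (-1) *\<^sub>R y) * indicator unit_cube y \<partial>lborel)
        = (\<integral>\<^sup>+ y. g y * indicator unit_cube y \<partial>lborel)"
      by (rule periodic_scale) (auto simp: gper)
    also have "(\<integral>\<^sup>+ y. g y * indicator unit_cube y \<partial>lborel) = (\<integral>\<^sup>+ y. indicator S y \<partial>lborel)"
      using Ssub by (intro nn_integral_cong) (auto simp: g_def indicator_def fr_cube_id)
    also have "\<dots> = emeasure lborel S" by simp
    finally show ?thesis .
  qed
  have "emeasure lborel (E q S) = (\<integral>\<^sup>+ x. \<integral>\<^sup>+ y. indicator (E q S) (x, y) \<partial>lborel \<partial>lborel)"
    by (rule emeasure_prod_iter) measurable
  also have "\<dots> = (\<integral>\<^sup>+ x. indicator (unit_cube :: (real^'n) set) x * emeasure lborel S \<partial>lborel)"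
    by (simp add: inner)
  also have "\<dots> = emeasure lborel (unit_cube :: (real^'n) set) * emeasure lborel S"
    by (subst nn_integral_multc) auto
  also have "\<dots> = emeasure lborel S" by (simp add: emeasure_cube)
  finally show ?thesis .
qed


lemma vec_ident: "real_of_int q *\<^sub>R x + real_of_int (-1) *\<^sub>R g + real_of_int (q' - q) *\<^sub>R x = real_of_int q' *\<^sub>R x - (g :: real^'n)"
  by (simp add: algebra_simps scaleR_diff_left)

lemma pair_fun_meas:
  fixes F :: "(real^'n) \<Rightarrow> (real^'n) \<Rightarrow> ennreal"
  assumes "(\<lambda>p. F (fst p) (snd p)) \<in> borel_measurable borel"
  shows "case_prod F \<in> borel_measurable (lborel \<Otimes>\<^sub>M lborel)"
  using assms by (simp add: lborel_prod case_prod_beta')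

lemma ind_comp:
  assumes "\<phi> \<in> borel_measurable M" "A \<in> sets borel"
  shows "(\<lambda>x. indicator A (\<phi> x) :: ennreal) \<in> borel_measurable M"
  using measurable_compose[OF assms(1) borel_measurable_indicator[OF assms(2)]] by (simp add: o_def)

lemma emeasure_E_inter:
  fixes S S' :: "(real^'n) set"
  assumes [measurable]: "S \<in> sets borel" "S' \<in> sets borel"
    and Ssub: "S \<subseteq> unit_cube" and S'sub: "S' \<subseteq> unit_cube" and qq: "q \<noteq> q'"
  shows "emeasure lborel (E q S \<inter> E q' S') = emeasure lborel S * emeasure lborel S'"
proof -
  define k where "k = q' - q"
  have k0: "k \<noteq> 0" using qq by (simp add: k_def)
  define h where "h x w = (indicator S (fr w) * indicator S' (fr (w + real_of_int k *\<^sub>R x)) :: ennreal)" for x w :: "real^'n"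
  have hm[measurable]: "h x \<in> borel_measurable borel" for x
  proof -
    have "(\<lambda>w. fr (w + real_of_int k *\<^sub>R x)) \<in> borel_measurable borel"
      by (rule measurable_compose[OF _ fr_meas]) (intro borel_measurable_continuous_onI continuous_intros)
    then show ?thesis unfolding h_def by measurable
  qed
  have hper: "h x (w + ivec z) = h x w" for x w z
  proof -
    have "fr (w + ivec z + real_of_int k *\<^sub>R x) = fr (w + real_of_int k *\<^sub>R x)"
      by (metis add.commute add.left_commute fr_add_ivec)
    then show ?thesis by (simp add: h_def)
  qed
  define F where "F x w = (indicator unit_cube x * indicator S w * indicator S' (fr (w + real_of_int k *\<^sub>R x)) :: ennreal)" for x w :: "real^'n"
  have Fm: "case_prod F \<in> borel_measurable (lborel \<Otimes>\<^sub>M lborel)"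
  proof (rule pair_fun_meas)
    have "(\<lambda>p::(real^'n)\<times>(real^'n). fr (snd p + real_of_int k *\<^sub>R fst p)) \<in> borel_measurable borel"
      by (rule measurable_compose[OF _ fr_meas]) (intro borel_measurable_continuous_onI continuous_intros)
    then have m3: "(\<lambda>p::(real^'n)\<times>(real^'n). indicator S' (fr (snd p + real_of_int k *\<^sub>R fst p)) :: ennreal) \<in> borel_measurable borel"
      by (rule ind_comp) simp
    have m1: "(\<lambda>p::(real^'n)\<times>(real^'n). indicator unit_cube (fst p) :: ennreal) \<in> borel_measurable borel"
      by (rule ind_comp) (auto intro!: borel_measurable_continuous_onI continuous_intros)
    have m2: "(\<lambda>p::(real^'n)\<times>(real^'n). indicator S (snd p) :: ennreal) \<in> borel_measurable borel"
      by (rule ind_comp) (auto intro!: borel_measurable_continuous_onI continuous_intros)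
    show "(\<lambda>p. F (fst p) (snd p)) \<in> borel_measurable borel" unfolding F_def
      by (intro borel_measurable_times_ennreal m1 m2 m3)
  qed
  have inner: "(\<integral>\<^sup>+ y. indicator (E q S \<inter> E q' S') (x, y) \<partial>lborel) = (\<integral>\<^sup>+ w. F x w \<partial>lborel)" for x
  proof -
    have "(\<integral>\<^sup>+ y. indicator (E q S \<inter> E q' S') (x, y) \<partial>lborel)
        = (\<integral>\<^sup>+ y. indicator unit_cube x * (h x (real_of_int q *\<^sub>R x + real_of_int (-1) *\<^sub>R y) * indicator unit_cube y) \<partial>lborel)"
    proof (intro nn_integral_cong)
      fix y
      have "fr (real_of_int q *\<^sub>R x + real_of_int (-1) *\<^sub>R y + real_of_int k *\<^sub>R x) = fr (real_of_int q' *\<^sub>R x - y)"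
        unfolding k_def vec_ident ..
      then show "indicator (E q S \<inter> E q' S') (x, y) = indicator unit_cube x * (h x (real_of_int q *\<^sub>R x + real_of_int (-1) *\<^sub>R y) * indicator unit_cube y)"
        by (auto simp: E_def h_def indicator_def)
    qed
    also have "\<dots> = indicator unit_cube x * (\<integral>\<^sup>+ y. h x (real_of_int q *\<^sub>R x + real_of_int (-1) *\<^sub>R y) * indicator unit_cube y \<partial>lborel)"
      by (rule nn_integral_cmult) measurable
    also have "(\<integral>\<^sup>+ y. h x (real_of_int q *\<^sub>R x + real_of_int (-1) *\<^sub>R y) * indicator unit_cube y \<partial>lborel)
        = (\<integral>\<^sup>+ y. h x y * indicator unit_cube y \<partial>lborel)"
      by (rule periodic_scale) (auto simp: hper)
    also have "indicator unit_cube x * (\<integral>\<^sup>+ y. h x y * indicator unit_cube y \<partial>lborel) = (\<integral>\<^sup>+ y. indicator unit_cube x * (h x y * indicator unit_cube y) \<partial>lborel)"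
      by (rule nn_integral_cmult[symmetric]) measurable
    also have "\<dots> = (\<integral>\<^sup>+ w. F x w \<partial>lborel)"
      using Ssub by (intro nn_integral_cong) (auto simp: F_def h_def indicator_def fr_cube_id)
    finally show ?thesis .
  qed
  have inner2: "(\<integral>\<^sup>+ x. F x w \<partial>lborel) = indicator S w * emeasure lborel S'" for w
  proof -
    define g where "g v = (indicator S' (fr v) :: ennreal)" for v :: "real^'n"
    have [measurable]: "g \<in> borel_measurable borel" unfolding g_def by measurable
    have "(\<integral>\<^sup>+ x. F x w \<partial>lborel) = (\<integral>\<^sup>+ x. indicator S w * (g (w + real_of_int k *\<^sub>R x) * indicator unit_cube x) \<partial>lborel)"
      by (intro nn_integral_cong) (simp add: F_def g_def mult_ac)
    also have "\<dots> = indicator S w * (\<integral>\<^sup>+ x. g (w + real_of_int k *\<^sub>R x) * indicator unit_cube x \<partial>lborel)"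
      by (rule nn_integral_cmult) measurable
    also have "(\<integral>\<^sup>+ x. g (w + real_of_int k *\<^sub>R x) * indicator unit_cube x \<partial>lborel) = (\<integral>\<^sup>+ x. g x * indicator unit_cube x \<partial>lborel)"
      by (rule periodic_scale[OF _ _ k0]) (auto simp: g_def)
    also have "(\<integral>\<^sup>+ x. g x * indicator unit_cube x \<partial>lborel) = (\<integral>\<^sup>+ x. indicator S' x \<partial>lborel)"
      using S'sub by (intro nn_integral_cong) (auto simp: g_def indicator_def fr_cube_id)
    finally show ?thesis by simp
  qed
  have "emeasure lborel (E q S \<inter> E q' S') = (\<integral>\<^sup>+ x. \<integral>\<^sup>+ y. indicator (E q S \<inter> E q' S') (x, y) \<partial>lborel \<partial>lborel)"
    by (rule emeasure_prod_iter) measurable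
  also have "\<dots> = (\<integral>\<^sup>+ x. \<integral>\<^sup>+ w. F x w \<partial>lborel \<partial>lborel)" by (simp add: inner)
  also have "\<dots> = (\<integral>\<^sup>+ w. \<integral>\<^sup>+ x. F x w \<partial>lborel \<partial>lborel)"
    by (rule lborel_pair.Fubini'[OF Fm, symmetric])
  also have "\<dots> = (\<integral>\<^sup>+ w. indicator S w * emeasure lborel S' \<partial>lborel)" by (simp add: inner2)
  also have "\<dots> = emeasure lborel S * emeasure lborel S'"
    by (subst nn_integral_multc) auto
  finally show ?thesis .
qed

context finite_measure
begin

lemma ind_int[intro, simp]: "A \<in> sets M \<Longrightarrow> integrable M (indicator A :: 'a \<Rightarrow> real)"
  by (intro integrable_real_indicator) (auto simp: less_top[symmetric])

lemma cov_indicator: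
  assumes sp: "measure M (space M) = 1" and ev: "\<And>n. Ev n \<in> sets M"
    and ind: "\<And>i j. i \<noteq> j \<Longrightarrow> measure M (Ev i \<inter> Ev j) = measure M (Ev i) * measure M (Ev j)"
  defines "c \<equiv> \<lambda>i x. indicator (Ev i) x - measure M (Ev i)"
  shows "integrable M (\<lambda>x. c i x * c j x)"
    and "integral\<^sup>L M (\<lambda>x. c i x * c j x) = (if i = j then measure M (Ev i) - measure M (Ev i)^2 else 0)"
proof -
  have eq: "c i x * c j x = indicator (Ev i \<inter> Ev j) x - measure M (Ev j) * indicator (Ev i) x
     - measure M (Ev i) * indicator (Ev j) x + measure M (Ev i) * measure M (Ev j)" for x
    unfolding c_def by (simp add: indicator_inter_arith algebra_simps)
  have int: "integrable M (\<lambda>x. indicator (Ev i \<inter> Ev j) x - measure M (Ev j) * indicator (Ev i) x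
     - measure M (Ev i) * indicator (Ev j) x + measure M (Ev i) * measure M (Ev j))"
    using ev by (auto intro!: ind_int sets.Int)
  then show "integrable M (\<lambda>x. c i x * c j x)" unfolding eq .
  have "integral\<^sup>L M (\<lambda>x. c i x * c j x) = integral\<^sup>L M (\<lambda>x. indicator (Ev i \<inter> Ev j) x - measure M (Ev j) * indicator (Ev i) x
     - measure M (Ev i) * indicator (Ev j) x + measure M (Ev i) * measure M (Ev j))" unfolding eq ..
  also have "\<dots> = measure M (Ev i \<inter> Ev j) - measure M (Ev j) * measure M (Ev i) - measure M (Ev i) * measure M (Ev j) + measure M (Ev i) * measure M (Ev j)"
    using ev sp by (simp add: integral_add integral_diff ind_int sets.Int integrable_diff integrable_add
      integral_indicator sets.Int_space_eq2)
  also have "\<dots> = (if i = j then measure M (Ev i) - measure M (Ev i)^2 else 0)"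
    using ind[of i j] by (auto simp: power2_eq_square)
  finally show "integral\<^sup>L M (\<lambda>x. c i x * c j x) = (if i = j then measure M (Ev i) - measure M (Ev i)^2 else 0)" .
qed


lemma second_moment:
  assumes sp: "measure M (space M) = 1" and ev: "\<And>n. Ev n \<in> sets M"
    and ind: "\<And>i j. i \<noteq> j \<Longrightarrow> measure M (Ev i \<inter> Ev j) = measure M (Ev i) * measure M (Ev j)"
    and F: "finite F"
  defines "c \<equiv> \<lambda>i x. indicator (Ev i) x - measure M (Ev i)"
  shows "integrable M (\<lambda>x. (\<Sum>i\<in>F. c i x)^2)"
    and "integral\<^sup>L M (\<lambda>x. (\<Sum>i\<in>F. c i x)^2) \<le> (\<Sum>i\<in>F. measure M (Ev i))"
proof -
  have eq: "(\<lambda>x. (\<Sum>i\<in>F. c i x)^2) = (\<lambda>x. \<Sum>i\<in>F. \<Sum>j\<in>F. c i x * c j x)"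
    by (simp add: power2_eq_square sum_product)
  have int: "integrable M (\<lambda>x. c i x * c j x)" for i j
    using cov_indicator(1)[where Ev=Ev and i=i and j=j, OF sp ev ind] unfolding c_def by blast
  show "integrable M (\<lambda>x. (\<Sum>i\<in>F. c i x)^2)" unfolding eq using int by auto
  have "integral\<^sup>L M (\<lambda>x. (\<Sum>i\<in>F. c i x)^2) = (\<Sum>i\<in>F. \<Sum>j\<in>F. integral\<^sup>L M (\<lambda>x. c i x * c j x))"
    unfolding eq using int by (simp add: integral_sum integrable_sum)
  also have "\<dots> = (\<Sum>i\<in>F. \<Sum>j\<in>F. (if i = j then measure M (Ev i) - (measure M (Ev i))^2 else 0))"
    using cov_indicator(2)[where Ev=Ev, OF sp ev ind] unfolding c_def by simp
  also have "\<dots> = (\<Sum>i\<in>F. measure M (Ev i) - (measure M (Ev i))^2)"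
    using F by (simp add: sum.delta)
  also have "\<dots> \<le> (\<Sum>i\<in>F. measure M (Ev i))"
    by (intro sum_mono) simp
  finally show "integral\<^sup>L M (\<lambda>x. (\<Sum>i\<in>F. c i x)^2) \<le> (\<Sum>i\<in>F. measure M (Ev i))" .
qed

lemma cheb_block:
  assumes sp: "measure M (space M) = 1" and ev: "\<And>n. Ev n \<in> sets M"
    and ind: "\<And>i j. i \<noteq> j \<Longrightarrow> measure M (Ev i \<inter> Ev j) = measure M (Ev i) * measure M (Ev j)"
    and F: "finite F"
  shows "(\<Sum>i\<in>F. measure M (Ev i))^2 * measure M {x\<in>space M. \<forall>i\<in>F. x \<notin> Ev i} \<le> (\<Sum>i\<in>F. measure M (Ev i))"
proof -
  define c where "c = (\<lambda>i x. indicator (Ev i) x - measure M (Ev i) :: real)"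
  define s where "s = (\<Sum>i\<in>F. measure M (Ev i))"
  define B where "B = {x\<in>space M. \<forall>i\<in>F. x \<notin> Ev i}"
  have B_eq: "B = space M - (\<Union>i\<in>F. Ev i)" unfolding B_def by auto
  have Bm: "B \<in> sets M" unfolding B_eq using ev F by (intro sets.Diff sets.top sets.finite_UN) auto
  have "s^2 * measure M B = integral\<^sup>L M (\<lambda>x. s^2 * indicator B x)"
    using Bm by (simp add: sets.Int_space_eq2)
  also have "\<dots> \<le> integral\<^sup>L M (\<lambda>x. (\<Sum>i\<in>F. c i x)^2)"
  proof (rule integral_mono)
    show "integrable M (\<lambda>x. s^2 * indicator B x)" using Bm by (auto intro!: ind_int)
    show "integrable M (\<lambda>x. (\<Sum>i\<in>F. c i x)^2)" unfolding c_def by (rule second_moment(1)[OF sp ev ind F])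
    fix x assume "x \<in> space M"
    show "s^2 * indicator B x \<le> (\<Sum>i\<in>F. c i x)^2"
    proof (cases "x \<in> B")
      case True
      then have "(\<Sum>i\<in>F. c i x) = - s" unfolding c_def s_def B_def
        by (simp add: sum_negf[symmetric])
      then show ?thesis using True by simp
    next
      case False then show ?thesis by simp
    qed
  qed
  also have "\<dots> \<le> s" unfolding c_def s_def by (rule second_moment(2)[OF sp ev ind F])
  finally show ?thesis unfolding s_def B_def .
qed

lemma pairwise_BC:
  assumes sp: "measure M (space M) = 1" and ev: "\<And>n. Ev n \<in> sets M"
    and ind: "\<And>i j. i \<noteq> j \<Longrightarrow> measure M (Ev i \<inter> Ev j) = measure M (Ev i) * measure M (Ev j)"
    and nsum: "\<not> summable (\<lambda>n. measure M (Ev n))"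
  shows "AE x in M. \<forall>m. \<exists>n\<ge>m. x \<in> Ev n"
proof -
  define p where "p n = measure M (Ev n)" for n
  have p0: "0 \<le> p n" for n by (simp add: p_def)
  have unb: "\<exists>N. C < (\<Sum>i<N. p i)" for C
  proof (rule ccontr)
    assume "\<not> (\<exists>N. C < (\<Sum>i<N. p i))"
    then have "\<And>N. (\<Sum>i<N. p i) \<le> C" by (simp add: not_less)
    then have "summable p" by (intro summableI_nonneg_bounded[OF p0])
    moreover have "p = (\<lambda>n. measure M (Ev n))" by (simp add: fun_eq_iff p_def)
    ultimately show False using nsum by simp
  qed
  have "AE x in M. \<exists>n\<ge>m. x \<in> Ev n" for m
  proof -
    define Binf where "Binf = space M - (\<Union>n. Ev (n + m))"
    have Bm: "Binf \<in> sets M" unfolding Binf_def using ev by (intro sets.Diff sets.top sets.countable_UN) auto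
    have small: "measure M Binf \<le> e" if e: "e > 0" for e
    proof -
      obtain N where N: "(\<Sum>i<m. p i) + 1 / e < (\<Sum>i<N. p i)" using unb by blast
      have "m \<le> N"
      proof (rule ccontr)
        assume "\<not> m \<le> N"
        then have "(\<Sum>i<N. p i) \<le> (\<Sum>i<m. p i)" by (intro sum_mono2) (auto simp: p0)
        moreover have "0 < 1 / e" using e by simp
        ultimately show False using N by linarith
      qed
      define s where "s = (\<Sum>i\<in>{m..<N}. p i)"
      have "(\<Sum>i<N. p i) = (\<Sum>i\<in>{..<N} - {..<m}. p i) + (\<Sum>i<m. p i)"
        using \<open>m \<le> N\<close> by (intro sum.subset_diff) auto
      moreover have "{..<N} - {..<m} = {m..<N}" by auto
      ultimately have "(\<Sum>i<N. p i) = s + (\<Sum>i<m. p i)" unfolding s_def by simp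
      with N have s: "1 / e < s" by simp
      have spos: "0 < s" using s e by (smt (verit) divide_pos_pos)
      have cb: "s^2 * measure M {x\<in>space M. \<forall>i\<in>{m..<N}. x \<notin> Ev i} \<le> s"
        using cheb_block[where Ev=Ev and F="{m..<N}", OF sp ev ind] unfolding s_def p_def by simp
      have "Binf \<subseteq> {x\<in>space M. \<forall>i\<in>{m..<N}. x \<notin> Ev i}"
        unfolding Binf_def by (auto, metis le_add_diff_inverse2)
      then have "measure M Binf \<le> measure M {x\<in>space M. \<forall>i\<in>{m..<N}. x \<notin> Ev i}"
        by (intro finite_measure_mono) (use ev in \<open>auto intro!: sets.sets_Collect_finite_All'\<close>)
      also have "\<dots> \<le> 1 / s"
        using cb spos by (simp add: field_simps power2_eq_square)
      also have "\<dots> \<le> e" using s e spos by (simp add: field_simps)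
      finally show ?thesis .
    qed
    have "measure M Binf = 0"
    proof (rule ccontr)
      assume "measure M Binf \<noteq> 0"
      then have "measure M Binf > 0" using measure_nonneg[of M Binf] by linarith
      then show False using small[of "measure M Binf / 2"] by simp
    qed
    then have "Binf \<in> null_sets M" using Bm by (simp add: emeasure_eq_measure null_sets_def)
    then have "AE x in M. x \<notin> Binf" by (rule AE_not_in)
    then show ?thesis using AE_space
    proof (eventually_elim)
      case (elim x)
      then obtain n where "x \<in> Ev (n + m)" unfolding Binf_def by auto
      then show ?case by (intro exI[of _ "n + m"]) auto
    qed
  qed
  then show ?thesis by (simp add: AE_all_countable)
qed

end

lemma infinite_shift: "infinite {q::nat. q \<ge> 1 \<and> P q} \<longleftrightarrow> (\<forall>m. \<exists>n\<ge>m. P (Suc n))"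
proof
  assume "infinite {q::nat. q \<ge> 1 \<and> P q}"
  then have h: "\<forall>m. \<exists>n\<ge>m. n \<ge> 1 \<and> P n" by (simp add: infinite_nat_iff_unbounded_le)
  show "\<forall>m. \<exists>n\<ge>m. P (Suc n)"
  proof
    fix m
    obtain n where "n \<ge> Suc m" "n \<ge> 1" "P n" using h by blast
    then show "\<exists>n\<ge>m. P (Suc n)" by (intro exI[of _ "n - 1"]) auto
  qed
next
  assume h: "\<forall>m. \<exists>n\<ge>m. P (Suc n)"
  show "infinite {q::nat. q \<ge> 1 \<and> P q}" unfolding infinite_nat_iff_unbounded_le
  proof
    fix m
    obtain n where "n \<ge> m" "P (Suc n)" using h by blast
    then show "\<exists>n\<ge>m. n \<in> {q. 1 \<le> q \<and> P q}" by (intro exI[of _ "Suc n"]) auto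
  qed
qed

definition Lim :: "(nat \<Rightarrow> (real^'n) set) \<Rightarrow> ((real^'n) \<times> (real^'n)) set" where
  "Lim T = {p. \<forall>m. \<exists>n\<ge>m. p \<in> E (int (Suc n)) (T (Suc n))}"

lemma E_mem: "(x, g) \<in> E (int n) S \<longleftrightarrow> x \<in> unit_cube \<and> g \<in> unit_cube \<and> fr (of_nat n *\<^sub>R x - g) \<in> S"
  by (simp add: E_def)

lemma Lim_eq: fixes T :: "nat \<Rightarrow> (real^'n) set" shows "{(x, g). x \<in> unit_cube \<and> g \<in> unit_cube \<and> infinite {q. q \<ge> 1 \<and> fr (of_nat q *\<^sub>R x - g) \<in> T q}} = Lim T"
proof (intro set_eqI)
  fix p :: "(real^'n) \<times> (real^'n)"
  obtain x g where p: "p = (x, g)" by (cases p)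
  define P where "P q \<longleftrightarrow> fr (of_nat q *\<^sub>R x - g) \<in> T q" for q
  have "p \<in> Lim T \<longleftrightarrow> (\<forall>m. \<exists>n\<ge>m. x \<in> unit_cube \<and> g \<in> unit_cube \<and> P (Suc n))"
    unfolding Lim_def p P_def mem_Collect_eq E_mem ..
  also have "\<dots> \<longleftrightarrow> x \<in> unit_cube \<and> g \<in> unit_cube \<and> (\<forall>m. \<exists>n\<ge>m. P (Suc n))"
    by blast
  also have "\<dots> \<longleftrightarrow> x \<in> unit_cube \<and> g \<in> unit_cube \<and> infinite {q. q \<ge> 1 \<and> P q}"
    by (simp only: infinite_shift)
  finally show "p \<in> {(x, g). x \<in> unit_cube \<and> g \<in> unit_cube \<and> infinite {q. q \<ge> 1 \<and> fr (of_nat q *\<^sub>R x - g) \<in> T q}} \<longleftrightarrow> p \<in> Lim T"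
    unfolding p P_def by simp
qed

lemma Lim_borel:
  fixes T :: "nat \<Rightarrow> (real^'n) set"
  assumes "\<And>n. T (Suc n) \<in> sets borel"
  shows "Lim T \<in> sets borel"
proof -
  have "Lim T = (\<Inter>m. \<Union>n. E (int (Suc (n + m))) (T (Suc (n + m))))"
  proof (intro set_eqI iffI)
    fix p assume "p \<in> Lim T"
    then have h: "\<forall>m. \<exists>n\<ge>m. p \<in> E (int (Suc n)) (T (Suc n))" by (simp add: Lim_def)
    show "p \<in> (\<Inter>m. \<Union>n. E (int (Suc (n + m))) (T (Suc (n + m))))"
    proof (intro InterI, clarify)
      fix m
      obtain n where "n \<ge> m" "p \<in> E (int (Suc n)) (T (Suc n))" using h by blast
      then have "p \<in> E (int (Suc ((n - m) + m))) (T (Suc ((n - m) + m)))" by simp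
      then show "p \<in> (\<Union>n. E (int (Suc (n + m))) (T (Suc (n + m))))" by blast
    qed
  next
    fix p assume "p \<in> (\<Inter>m. \<Union>n. E (int (Suc (n + m))) (T (Suc (n + m))))"
    then have h: "\<forall>m. \<exists>n. p \<in> E (int (Suc (n + m))) (T (Suc (n + m)))" by blast
    have "\<forall>m. \<exists>n\<ge>m. p \<in> E (int (Suc n)) (T (Suc n))"
    proof
      fix m obtain n where "p \<in> E (int (Suc (n + m))) (T (Suc (n + m)))" using h by blast
      then show "\<exists>n\<ge>m. p \<in> E (int (Suc n)) (T (Suc n))" by (intro exI[of _ "n + m"]) auto
    qed
    then show "p \<in> Lim T" by (simp add: Lim_def)
  qed
  also have "\<dots> \<in> sets borel" using assms
    by (intro sets.countable_INT' sets.countable_UN) auto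
  finally show ?thesis .
qed

lemma E_mono: "C \<subseteq> B \<Longrightarrow> E q C \<subseteq> E q B" by (auto simp: E_def)

lemma Lim_mono: "(\<And>n. C (Suc n) \<subseteq> B (Suc n)) \<Longrightarrow> Lim C \<subseteq> Lim B"
  unfolding Lim_def using E_mono by blast

lemma Lim_diff: "Lim B - Lim C \<subseteq> (\<Union>n. E (int (Suc n)) (B (Suc n) - C (Suc n)))"
proof
  fix p assume "p \<in> Lim B - Lim C"
  then obtain m where m: "\<forall>n\<ge>m. p \<notin> E (int (Suc n)) (C (Suc n))" and hB: "\<forall>m. \<exists>n\<ge>m. p \<in> E (int (Suc n)) (B (Suc n))"
    unfolding Lim_def by auto
  then obtain n where "n \<ge> m" "p \<in> E (int (Suc n)) (B (Suc n))" by blast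
  with m have "p \<in> E (int (Suc n)) (B (Suc n) - C (Suc n))" by (auto simp: E_def)
  then show "p \<in> (\<Union>n. E (int (Suc n)) (B (Suc n) - C (Suc n)))" by blast
qed

lemma emeasure_Q: "emeasure lborel ((unit_cube :: (real^'n) set) \<times> (unit_cube :: (real^'n) set)) = 1"
proof -
  have "emeasure lborel ((unit_cube :: (real^'n) set) \<times> (unit_cube :: (real^'n) set))
      = emeasure (lborel \<Otimes>\<^sub>M lborel) ((unit_cube :: (real^'n) set) \<times> (unit_cube :: (real^'n) set))"
    by (simp add: lborel_prod)
  also have "\<dots> = emeasure lborel (unit_cube :: (real^'n) set) * emeasure lborel (unit_cube :: (real^'n) set)"
    by (rule lborel.emeasure_pair_measure_Times) auto
  finally show ?thesis by (simp add: emeasure_cube)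
qed

lemma E_sub_Q: "E q S \<subseteq> unit_cube \<times> unit_cube" by (auto simp: E_def)


lemma Lim_sub_Q: "Lim T \<subseteq> unit_cube \<times> unit_cube"
  unfolding Lim_def using E_sub_Q by blast

lemma sandwich:
  fixes C X B :: "('a::euclidean_space) set"
  assumes C: "C \<in> sets borel" and B: "B \<in> sets borel" and CX: "C \<subseteq> X" and XB: "X \<subseteq> B"
    and null: "emeasure lborel (B - C) = 0"
  shows "X \<in> sets lebesgue" "emeasure lebesgue X = emeasure lborel C" "emeasure lborel B = emeasure lborel C"
proof -
  have BC: "B - C \<in> null_sets lborel" using null B C by (auto intro: null_setsI)
  have X: "X = C \<union> (X - C)" using CX by auto
  show Xm: "X \<in> sets lebesgue"
    by (rule sets_completionI[OF X, of "B - C"]) (use XB BC C in auto)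
  have "emeasure lborel B \<le> emeasure lborel (C \<union> (B - C))" by (intro emeasure_mono) (use B C in auto)
  also have "\<dots> \<le> emeasure lborel C + emeasure lborel (B - C)" by (rule emeasure_subadditive) (use B C in auto)
  finally have "emeasure lborel B \<le> emeasure lborel C" using null by simp
  moreover have "emeasure lborel C \<le> emeasure lborel B" using CX XB B by (intro emeasure_mono) auto
  ultimately show BCeq: "emeasure lborel B = emeasure lborel C" by (rule antisym)
  have "emeasure lebesgue C \<le> emeasure lebesgue X" using Xm CX by (intro emeasure_mono) auto
  moreover have "emeasure lebesgue X \<le> emeasure lebesgue B" using XB B by (intro emeasure_mono) auto
  ultimately show "emeasure lebesgue X = emeasure lborel C" using BCeq B C by (simp add: antisym)
qed

lemma emeasure_le_1_cube: "S \<subseteq> unit_cube \<Longrightarrow> S \<in> sets borel \<Longrightarrow> emeasure lborel (S :: (real^'n) set) \<le> 1"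
  using emeasure_mono[of S "unit_cube :: (real^'n) set" lborel] by (simp add: emeasure_cube)

theorem theorem6p1:
  fixes As :: "nat \<Rightarrow> (real ^ 'n) set"
    and A :: "((real ^ 'n) \<times> (real ^ 'n)) set"
  assumes meas: "\<And>q. q \<ge> 1 \<Longrightarrow> As q \<in> sets lebesgue"
    and sub: "\<And>q. q \<ge> 1 \<Longrightarrow> As q \<subseteq> unit_cube"
    and A_def: "A = {(x, \<gamma>). x \<in> unit_cube \<and> \<gamma> \<in> unit_cube \<and>
        infinite {q. q \<ge> 1 \<and> (\<exists>p\<in>int_vecs. of_nat q *\<^sub>R x - \<gamma> - p \<in> As q)}}"
  shows "A \<in> sets lebesgue
    \<and> ((\<Sum>r. emeasure lebesgue (As (Suc r))) < \<infinity> \<longrightarrow> emeasure lebesgue A = 0)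
    \<and> ((\<Sum>r. emeasure lebesgue (As (Suc r))) = \<infinity> \<longrightarrow> emeasure lebesgue A = 1)"
proof -
  have dec: "\<exists>C B. C \<in> sets borel \<and> B \<in> sets borel \<and> C \<subseteq> As q \<and> As q \<subseteq> B \<and> B \<subseteq> unit_cube \<and> emeasure lborel (B - C) = 0"
    if q: "q \<ge> 1" for q
  proof -
    have "As q \<in> sets (completion lborel)" using meas[OF q] by simp
    then obtain S N N' where SN: "As q = S \<union> N" "N \<subseteq> N'" "N' \<in> null_sets lborel" "S \<in> sets lborel"
      by (rule sets_completionE)
    have N'm: "N' \<in> sets borel" using SN(3) by auto
    define B where "B = (S \<union> N') \<inter> unit_cube"
    have Sm: "S \<in> sets borel" using SN(4) by simp
    have Bm: "B \<in> sets borel" unfolding B_def using Sm N'm by auto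
    have "B - S \<in> null_sets lborel"
      by (rule null_sets_subset[OF SN(3)]) (use Bm Sm in \<open>auto simp: B_def\<close>)
    then have "emeasure lborel (B - S) = 0" by auto
    moreover have "S \<subseteq> As q" "As q \<subseteq> B" "B \<subseteq> unit_cube" using SN sub[OF q] by (auto simp: B_def)
    ultimately show ?thesis using Sm Bm by (intro exI[of _ S] exI[of _ B]) simp
  qed
  define P where "P q C B \<longleftrightarrow> (q \<ge> 1 \<longrightarrow> C \<in> sets borel \<and> B \<in> sets borel \<and> C \<subseteq> As q \<and> As q \<subseteq> B \<and> B \<subseteq> unit_cube \<and> emeasure lborel (B - C) = 0)" for q C B
  have "\<forall>q. \<exists>C B. P q C B"
  proof
    fix q show "\<exists>C B. P q C B"
    proof (cases "q \<ge> 1")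
      case True then show ?thesis using dec[OF True] unfolding P_def by blast
    next
      case False then show ?thesis unfolding P_def by blast
    qed
  qed
  then have "\<forall>q. \<exists>CB. P q (fst CB) (snd CB)" by simp
  from choice[OF this] obtain CB where CBf: "\<And>q. P q (fst (CB q)) (snd (CB q))" by blast
  define C where "C q = fst (CB q)" for q
  define B where "B q = snd (CB q)" for q
  have CB: "\<And>q. q \<ge> 1 \<Longrightarrow> C q \<in> sets borel \<and> B q \<in> sets borel \<and> C q \<subseteq> As q \<and> As q \<subseteq> B q \<and> B q \<subseteq> unit_cube \<and> emeasure lborel (B q - C q) = 0"
    using CBf unfolding P_def C_def B_def by blast
  have Cm[measurable]: "C (Suc n) \<in> sets borel" and Bm[measurable]: "B (Suc n) \<in> sets borel"
    and CA: "C (Suc n) \<subseteq> As (Suc n)" and AB: "As (Suc n) \<subseteq> B (Suc n)" and Bsub: "B (Suc n) \<subseteq> unit_cube"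
    and BCnull: "emeasure lborel (B (Suc n) - C (Suc n)) = 0" for n
    using CB[of "Suc n"] by auto
  have Csub: "C (Suc n) \<subseteq> unit_cube" for n using CA AB Bsub by blast
  have measC: "emeasure lebesgue (As (Suc n)) = emeasure lborel (C (Suc n))" for n
    using sandwich(2)[OF Cm Bm CA AB BCnull] .
  have measB: "emeasure lborel (B (Suc n)) = emeasure lborel (C (Suc n))" for n
    using sandwich(3)[OF Cm Bm CA AB BCnull] .

  have AL: "A = Lim As"
  proof -
    have "{q. q \<ge> 1 \<and> (\<exists>p\<in>int_vecs. of_nat q *\<^sub>R x - \<gamma> - p \<in> As q)} = {q. q \<ge> 1 \<and> fr (of_nat q *\<^sub>R x - \<gamma>) \<in> As q}"
      for x \<gamma> :: "real^'n"
      using ex_int_iff_fr[OF sub] by blast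
    then have "A = {(x, \<gamma>). x \<in> unit_cube \<and> \<gamma> \<in> unit_cube \<and> infinite {q. q \<ge> 1 \<and> fr (of_nat q *\<^sub>R x - \<gamma>) \<in> As q}}"
      unfolding A_def by simp
    then show ?thesis using Lim_eq[of As] by simp
  qed
  have LCm: "Lim C \<in> sets borel" by (rule Lim_borel) simp
  have LBm: "Lim B \<in> sets borel" by (rule Lim_borel) simp
  have CAL: "Lim C \<subseteq> A" unfolding AL by (rule Lim_mono) (rule CA)
  have ABL: "A \<subseteq> Lim B" unfolding AL by (rule Lim_mono) (rule AB)
  have "(\<Union>n. E (int (Suc n)) (B (Suc n) - C (Suc n))) \<in> null_sets lborel"
  proof (rule null_sets_UN)
    fix n
    have "emeasure lborel (E (int (Suc n)) (B (Suc n) - C (Suc n))) = emeasure lborel (B (Suc n) - C (Suc n))"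
      by (rule emeasure_E) (use Bsub in auto)
    then show "E (int (Suc n)) (B (Suc n) - C (Suc n)) \<in> null_sets lborel"
      using BCnull by (auto intro: null_setsI)
  qed
  then have "Lim B - Lim C \<in> null_sets lborel"
    by (rule null_sets_subset) (use LBm LCm Lim_diff in auto)
  then have LBC0: "emeasure lborel (Lim B - Lim C) = 0" by auto
  have Am: "A \<in> sets lebesgue" and Ameas: "emeasure lebesgue A = emeasure lborel (Lim C)"
    and LBLC: "emeasure lborel (Lim B) = emeasure lborel (Lim C)"
    using sandwich[OF LCm LBm CAL ABL LBC0] by auto

  have conv: "emeasure lebesgue A = 0" if fin: "(\<Sum>r. emeasure lebesgue (As (Suc r))) < \<infinity>"
  proof -
    define Ev where "Ev n = E (int (Suc n)) (B (Suc n))" for n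
    have Evm[measurable]: "Ev n \<in> sets lborel" for n unfolding Ev_def by simp
    have EvE: "emeasure lborel (Ev n) = emeasure lebesgue (As (Suc n))" for n
      unfolding Ev_def measC measB[symmetric] by (rule emeasure_E) (use Bsub in auto)
    have Evfin: "emeasure lborel (Ev n) \<noteq> \<infinity>" for n
    proof -
      have "emeasure lborel (Ev n) \<le> 1" unfolding EvE measC measB[symmetric]
        by (rule emeasure_le_1_cube) (use Bsub in auto)
      then show ?thesis by (auto simp: top_unique)
    qed
    have "summable (\<lambda>n. measure lborel (Ev n))"
    proof (rule summable_suminf_not_top)
      have "(\<Sum>n. ennreal (measure lborel (Ev n))) = (\<Sum>n. emeasure lebesgue (As (Suc n)))"
        using Evfin by (simp add: emeasure_eq_ennreal_measure[symmetric] EvE)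
      then show "(\<Sum>n. ennreal (measure lborel (Ev n))) \<noteq> top" using fin by simp
    qed simp
    then have "AE x in lborel. eventually (\<lambda>n. x \<in> space lborel - Ev n) sequentially"
      by (intro borel_cantelli_AE1) (use Evfin Evm in \<open>auto simp: less_top\<close>)
    then have "AE x in lborel. x \<notin> Lim B"
    proof (rule AE_mp, intro AE_I2 impI)
      fix x assume "eventually (\<lambda>n. x \<in> space lborel - Ev n) sequentially"
      then obtain N where "\<forall>n\<ge>N. x \<notin> Ev n" by (auto simp: eventually_sequentially)
      then show "x \<notin> Lim B" unfolding Lim_def Ev_def by auto
    qed
    then have "emeasure lborel (Lim B) = 0"
      using AE_iff_measurable[of "Lim B" lborel "\<lambda>x. x \<notin> Lim B"] LBm by auto
    then show ?thesis using Ameas LBLC by simp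
  qed

  have div: "emeasure lebesgue A = 1" if inf: "(\<Sum>r. emeasure lebesgue (As (Suc r))) = \<infinity>"
  proof -
    define Q where "Q = (unit_cube :: (real^'n) set) \<times> (unit_cube :: (real^'n) set)"
    have Qm: "Q \<in> sets lborel" unfolding Q_def by (simp add: borel_Times)
    have Q1: "emeasure lborel Q = 1" unfolding Q_def by (rule emeasure_Q)
    define M where "M = restrict_space lborel Q"
    have spM: "space M = Q" by (simp add: M_def space_restrict_space)
    have QQ: "Q \<inter> space lborel \<in> sets lborel" using Qm by simp
    interpret M: finite_measure M
    proof (rule finite_measureI)
      show "emeasure M (space M) \<noteq> \<infinity>"
        unfolding spM unfolding M_def emeasure_restrict_space[OF QQ order_refl] Q1 by simp
    qed
    define Ev where "Ev n = E (int (Suc n)) (C (Suc n))" for n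
    have EvQ: "Ev n \<subseteq> Q" for n unfolding Ev_def Q_def by (rule E_sub_Q)
    have Evm: "Ev n \<in> sets M" for n
      unfolding M_def sets_restrict_space_iff[OF QQ] using EvQ by (simp add: Ev_def)
    have mEv: "measure M (Ev n) = measure lborel (C (Suc n))" for n
    proof -
      have "measure M (Ev n) = measure lborel (Ev n)" unfolding M_def by (rule measure_restrict_space[OF QQ EvQ])
      also have "\<dots> = measure lborel (C (Suc n))" unfolding Ev_def measure_def
        by (subst emeasure_E) (use Csub in auto)
      finally show ?thesis .
    qed
    have sp: "measure M (space M) = 1"
    proof -
      have "measure M (space M) = measure M Q" by (simp only: spM)
      also have "\<dots> = measure lborel Q" unfolding M_def by (rule measure_restrict_space[OF QQ order_refl])
      also have "\<dots> = 1" by (simp add: measure_def Q1)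
      finally show ?thesis .
    qed
    have ind: "measure M (Ev i \<inter> Ev j) = measure M (Ev i) * measure M (Ev j)" if ij: "i \<noteq> j" for i j
    proof -
      have "measure M (Ev i \<inter> Ev j) = measure lborel (Ev i \<inter> Ev j)" unfolding M_def
        by (rule measure_restrict_space[OF QQ]) (use EvQ in auto)
      also have "\<dots> = enn2real (emeasure lborel (C (Suc i)) * emeasure lborel (C (Suc j)))"
        unfolding Ev_def measure_def by (subst emeasure_E_inter) (use Csub ij in auto)
      also have "\<dots> = measure lborel (C (Suc i)) * measure lborel (C (Suc j))"
        by (simp add: enn2real_mult measure_def)
      finally show ?thesis by (simp add: mEv)
    qed
    have Cfin: "emeasure lborel (C (Suc n)) \<noteq> \<infinity>" for n
    proof -
      have "emeasure lborel (C (Suc n)) \<le> 1" by (rule emeasure_le_1_cube) (use Csub in auto)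
      then show ?thesis by (auto simp: top_unique)
    qed
    have nsum: "\<not> summable (\<lambda>n. measure M (Ev n))"
    proof
      assume "summable (\<lambda>n. measure M (Ev n))"
      then have "summable (\<lambda>n. measure lborel (C (Suc n)))" by (simp add: mEv)
      then have "(\<Sum>n. ennreal (measure lborel (C (Suc n)))) = ennreal (\<Sum>n. measure lborel (C (Suc n)))"
        by (intro suminf_ennreal2) auto
      moreover have "(\<Sum>n. ennreal (measure lborel (C (Suc n)))) = (\<Sum>r. emeasure lebesgue (As (Suc r)))"
        using Cfin by (simp add: emeasure_eq_ennreal_measure[symmetric] measC)
      ultimately show False using inf by simp
    qed
    have "AE x in M. \<forall>m. \<exists>n\<ge>m. x \<in> Ev n"
      by (rule M.pairwise_BC[OF sp Evm ind nsum])
    then have "AE x in lborel. x \<in> Q \<longrightarrow> (\<forall>m. \<exists>n\<ge>m. x \<in> Ev n)"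
      using AE_restrict_space_iff[OF QQ, of "\<lambda>x. \<forall>m. \<exists>n\<ge>m. x \<in> Ev n"] unfolding M_def by simp
    then have "AE x in lborel. x \<in> Lim C \<longleftrightarrow> x \<in> Q"
    proof (rule AE_mp, intro AE_I2 impI)
      fix x assume "x \<in> Q \<longrightarrow> (\<forall>m. \<exists>n\<ge>m. x \<in> Ev n)"
      moreover have "x \<in> Lim C \<Longrightarrow> x \<in> Q" using Lim_sub_Q unfolding Q_def by blast
      ultimately show "x \<in> Lim C \<longleftrightarrow> x \<in> Q" unfolding Lim_def Ev_def by blast
    qed
    then have "emeasure lborel (Lim C) = emeasure lborel Q"
      by (rule emeasure_eq_AE) (use LCm Qm in auto)
    then show ?thesis using Ameas Q1 by simp
  qed
  show ?thesis using Am conv div by blast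
qed

end
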